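(* Let $S$ be a numerical semigroup with conductor $c$, let $m\ge 2c-1$ and let $r$ be a positive integer. Then among the optimal configurations of cardinality $r$ there is one which is an $(S,m,r)$-amenable set.
   Context: A numerical semigroup is a submonoid of $\mathbb N$ with finite complement; its conductor $c$ is the least element of $S$ such that $c+n\in S$ for all $n\in\mathbb N$. For $x\in S$, $\mathrm D(x)=\{\alpha\in S\mid x-\alpha\in S\}$, and for $M\subseteq S$, $\mathrm D(M)=\bigcup_{x\in M}\mathrm D(x)$. For $m\in S$, $\delta^r(m)=\min\{\sharp\mathrm D(\{m_1,\ldots,m_r\})\mid m\le m_1<\cdots<m_r,\ m_i\in S\}$. A configuration is a finite subset of $S\cap[m,\infty)$; a configuration $M$ of cardinality $r$ is optimal if $\sharp\mathrm D(M)=\delta^r(m)$. A set $M=\{m_1<\cdots<m_r\}\subseteq S$ with $2c-1\le m=m_1$ is $(S,m,r)$-amenable if $\mathrm D(m_i)\cap[m,\infty)\subseteq M$ for all $i\in\{1,\ldots,r\}$. *)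

theory Defs
  imports Main
begin

definition numerical_semigroup :: "nat set \<Rightarrow> bool" where
  "numerical_semigroup S \<longleftrightarrow> 0 \<in> S \<and> (\<forall>a\<in>S. \<forall>b\<in>S. a + b \<in> S) \<and> finite (UNIV - S)"

definition conductor :: "nat set \<Rightarrow> nat" where
  "conductor S = (LEAST c. c \<in> S \<and> (\<forall>n. c + n \<in> S))"

(* D(x) = {alpha in S | x - alpha in S}; subtraction in Z, so alpha \<le> x is required *)
definition Dset :: "nat set \<Rightarrow> nat \<Rightarrow> nat set" where
  "Dset S x = {a \<in> S. a \<le> x \<and> x - a \<in> S}"

definition DsetM :: "nat set \<Rightarrow> nat set \<Rightarrow> nat set" where
  "DsetM S M = (\<Union>x\<in>M. Dset S x)"

definition configs :: "nat set \<Rightarrow> nat \<Rightarrow> nat \<Rightarrow> nat set set" where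
  "configs S m r = {M. finite M \<and> M \<subseteq> S \<and> (\<forall>x\<in>M. m \<le> x) \<and> card M = r}"

definition delta :: "nat set \<Rightarrow> nat \<Rightarrow> nat \<Rightarrow> nat" where
  "delta S r m = (LEAST k. \<exists>M\<in>configs S m r. k = card (DsetM S M))"

definition optimal_config :: "nat set \<Rightarrow> nat \<Rightarrow> nat \<Rightarrow> nat set \<Rightarrow> bool" where
  "optimal_config S m r M \<longleftrightarrow> M \<in> configs S m r \<and> card (DsetM S M) = delta S r m"

definition amenable :: "nat set \<Rightarrow> nat \<Rightarrow> nat \<Rightarrow> nat set \<Rightarrow> bool" where
  "amenable S m r M \<longleftrightarrow> finite M \<and> M \<subseteq> S \<and> card M = r \<and> M \<noteq> {} \<and> Min M = m
     \<and> 2 * conductor S - 1 \<le> m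
     \<and> (\<forall>x\<in>M. Dset S x \<inter> {m..} \<subseteq> M)"

end

theory Submission
  imports Defs
begin

lemma cond_prop:
  assumes ns: "numerical_semigroup S"
  shows "conductor S \<in> S \<and> (\<forall>n. conductor S + n \<in> S)"
proof -
  let ?F = "UNIV - S"
  have fin: "finite ?F" using ns unfolding numerical_semigroup_def by blast
  define c0 where "c0 = (if ?F = {} then 0 else Suc (Max ?F))"
  have "\<forall>n. c0 + n \<in> S"
  proof
    fix n
    show "c0 + n \<in> S"
    proof (rule ccontr)
      assume "c0 + n \<notin> S"
      hence inF: "c0 + n \<in> ?F" by blast
      hence "?F \<noteq> {}" by blast
      hence "c0 = Suc (Max ?F)" by (simp add: c0_def)
      moreover have "c0 + n \<le> Max ?F" using Max_ge[OF fin inF] .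
      ultimately show False by simp
    qed
  qed
  hence "c0 \<in> S \<and> (\<forall>n. c0 + n \<in> S)" by (metis add_0_right)
  thus ?thesis unfolding conductor_def by (rule LeastI)
qed

lemma ge_cond:
  assumes "numerical_semigroup S" "conductor S \<le> n"
  shows "n \<in> S"
  using cond_prop[OF assms(1)] assms(2) by (metis le_add_diff_inverse)

lemma Dset_fin: "finite (Dset S x)"
  by (rule finite_subset[of _ "{..x}"]) (auto simp: Dset_def)

lemma DsetM_fin: "finite M \<Longrightarrow> finite (DsetM S M)"
  by (auto simp: DsetM_def Dset_fin)

lemma shift_card:
  assumes ns: "numerical_semigroup S" and fin: "finite M" and ne: "M \<noteq> {}"
    and ge: "\<forall>y\<in>M. m + t \<le> y" and mc: "2 * conductor S - 1 \<le> m"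
  shows "card (DsetM S ((\<lambda>y. y - t) ` M)) \<le> card (DsetM S M)"
proof -
  define c where "c = conductor S"
  have inS: "\<And>n. c \<le> n \<Longrightarrow> n \<in> S" using ge_cond[OF ns] c_def by blast
  define mr where "mr = Max M"
  have mrM: "mr \<in> M" using fin ne by (simp add: mr_def)
  have mrge: "\<And>y. y \<in> M \<Longrightarrow> y \<le> mr" using fin by (simp add: mr_def)
  have mrm: "m + t \<le> mr" using ge mrM by blast
  define f where "f = (\<lambda>a. if a + c + t \<le> mr then a else a + t)"
  have maps: "f ` DsetM S ((\<lambda>y. y - t) ` M) \<subseteq> DsetM S M"
  proof
    fix b assume "b \<in> f ` DsetM S ((\<lambda>y. y - t) ` M)"
    then obtain a y where yM: "y \<in> M" and aD: "a \<in> Dset S (y - t)" and b: "b = f a"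
      by (auto simp: DsetM_def)
    have aS: "a \<in> S" and ale: "a \<le> y - t" and dS: "y - t - a \<in> S" using aD by (auto simp: Dset_def)
    have yt: "m + t \<le> y" using ge yM by blast
    show "b \<in> DsetM S M"
    proof (cases "a + c + t \<le> mr")
      case True
      hence "b = a" by (simp add: b f_def)
      moreover have "mr - a \<in> S" using True by (intro inS) linarith
      moreover have "a \<le> mr" using True by simp
      ultimately show ?thesis using aS mrM by (auto simp: DsetM_def Dset_def)
    next
      case False
      hence "b = a + t" by (simp add: b f_def)
      moreover have "c \<le> a + t" using False mrm mc c_def by linarith
      hence "a + t \<in> S" by (rule inS)
      moreover have "a + t \<le> y" using ale yt by simp
      moreover have "y - (a + t) = y - t - a" by simp
      ultimately show ?thesis using dS yM by (auto simp: DsetM_def Dset_def)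
    qed
  qed
  have "inj_on f (DsetM S ((\<lambda>y. y - t) ` M))"
  proof (rule inj_onI)
    fix x y assume "f x = f y"
    thus "x = y" unfolding f_def by (cases "x + c + t \<le> mr"; cases "y + c + t \<le> mr"; simp)
  qed
  thus ?thesis using maps DsetM_fin[OF fin] by (rule card_inj_on_le)
qed

lemma Dset_sub:
  assumes ns: "numerical_semigroup S" and "a \<in> Dset S x"
  shows "Dset S a \<subseteq> Dset S x"
proof
  fix b assume b: "b \<in> Dset S a"
  have add: "\<And>u v. u \<in> S \<Longrightarrow> v \<in> S \<Longrightarrow> u + v \<in> S" using ns unfolding numerical_semigroup_def by blast
  have "x - a \<in> S" "a \<le> x" using assms(2) by (auto simp: Dset_def)
  moreover have "b \<in> S" "b \<le> a" "a - b \<in> S" using b by (auto simp: Dset_def)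
  moreover have "x - b = (a - b) + (x - a)" using calculation by simp
  moreover have "x - b \<in> S" using calculation add by metis
  ultimately show "b \<in> Dset S x" by (auto simp: Dset_def)
qed

theorem proposition3p7:
  fixes S :: "nat set" and m r :: nat
  assumes "numerical_semigroup S"
    and "2 * conductor S - 1 \<le> m"
    and "0 < r"
  shows "\<exists>M. optimal_config S m r M \<and> amenable S m r M"
proof -
  note ns = assms(1)
  define c where "c = conductor S"
  have inS: "\<And>n. c \<le> n \<Longrightarrow> n \<in> S" using ge_cond[OF ns] c_def by blast
  have mc: "c \<le> m" using assms(2) unfolding c_def by linarith
  let ?P = "\<lambda>k. \<exists>M\<in>configs S m r. k = card (DsetM S M)"
  have "{m..<m+r} \<in> configs S m r" using mc inS by (auto simp: configs_def)
  hence "?P (card (DsetM S {m..<m+r}))" by blast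
  hence "?P (delta S r m)" unfolding delta_def by (rule LeastI)
  then obtain M0 where "optimal_config S m r M0" by (auto simp: optimal_config_def)
  then obtain M where opt: "optimal_config S m r M"
    and least: "\<And>M'. optimal_config S m r M' \<Longrightarrow> sum id M \<le> sum id M'"
    using ex_has_least_nat[of "optimal_config S m r" M0 "sum id"] by blast
  have dle: "\<And>M'. M' \<in> configs S m r \<Longrightarrow> delta S r m \<le> card (DsetM S M')"
    unfolding delta_def by (rule Least_le) blast
  have better: "sum id M \<le> sum id M'" if "M' \<in> configs S m r" "card (DsetM S M') \<le> card (DsetM S M)" for M'
  proof -
    have "optimal_config S m r M'" using that dle[OF that(1)] opt by (auto simp: optimal_config_def)
    thus ?thesis by (rule least)
  qed
  have fin: "finite M" and MS: "M \<subseteq> S" and Mge: "\<forall>x\<in>M. m \<le> x" and cM: "card M = r"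
    using opt by (auto simp: optimal_config_def configs_def)
  have ne: "M \<noteq> {}" using cM assms(3) by auto
  have clos: "\<forall>x\<in>M. Dset S x \<inter> {m..} \<subseteq> M"
  proof (intro ballI subsetI)
    fix x a assume xM: "x \<in> M" and a: "a \<in> Dset S x \<inter> {m..}"
    show "a \<in> M"
    proof (rule ccontr)
      assume aM: "a \<notin> M"
      have aS: "a \<in> S" and ax: "a \<le> x" and am: "m \<le> a" using a by (auto simp: Dset_def)
      have axne: "a \<noteq> x" using aM xM by blast
      define M' where "M' = insert a (M - {x})"
      have fin': "finite (M - {x})" using fin by simp
      have anot: "a \<notin> M - {x}" using aM by blast
      have "card M' = card (M - {x}) + 1" unfolding M'_def using fin' anot by simp
      also have "\<dots> = r" using cM xM fin ne by (simp add: card_Diff_singleton) (metis One_nat_def Suc_pred card_gt_0_iff)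
      finally have cM': "card M' = r" .
      have "M' \<in> configs S m r" using cM' fin MS Mge aS am by (auto simp: configs_def M'_def)
      moreover have "DsetM S M' \<subseteq> DsetM S M"
        using Dset_sub[OF ns, of a x] a xM by (auto simp: DsetM_def M'_def)
      hence "card (DsetM S M') \<le> card (DsetM S M)" using DsetM_fin[OF fin] by (rule card_mono[rotated])
      ultimately have le: "sum id M \<le> sum id M'" by (rule better)
      have "sum id M' = a + sum id (M - {x})" unfolding M'_def using fin' anot by simp
      moreover have "sum id M = x + sum id (M - {x})" using fin xM by (metis id_apply sum.remove)
      ultimately show False using le ax axne by simp
    qed
  qed
  have minM: "Min M = m"
  proof (rule ccontr)
    assume neq: "Min M \<noteq> m"
    have "m \<le> Min M" using Mge fin ne by simp
    define t where "t = Min M - m"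
    have tpos: "0 < t" using neq \<open>m \<le> Min M\<close> by (simp add: t_def)
    have ge: "\<forall>y\<in>M. m + t \<le> y" using fin ne \<open>m \<le> Min M\<close> by (auto simp: t_def)
    define M' where "M' = (\<lambda>y. y - t) ` M"
    have inj: "inj_on (\<lambda>y. y - t) M" proof (rule inj_onI)
      fix x y assume "x \<in> M" "y \<in> M" "x - t = y - t"
      moreover have "t \<le> x" "t \<le> y" using ge calculation by fastforce+
      ultimately show "x = y" by linarith
    qed
    have "card M' = r" using inj cM by (simp add: M'_def card_image)
    moreover have "\<forall>x\<in>M'. m \<le> x" using ge by (auto simp: M'_def)
    moreover have "M' \<subseteq> S" using ge mc inS by (auto simp: M'_def)
    ultimately have "M' \<in> configs S m r" using fin by (auto simp: configs_def M'_def)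
    moreover have "card (DsetM S M') \<le> card (DsetM S M)"
      unfolding M'_def using shift_card[OF ns fin ne ge assms(2)] .
    ultimately have le: "sum id M \<le> sum id M'" by (rule better)
    have "sum id M' = sum (\<lambda>y. y - t) M" unfolding M'_def using inj by (simp add: sum.reindex)
    also have "\<dots> < sum id M" using fin ne ge tpos by (intro sum_strict_mono) auto
    finally show False using le by simp
  qed
  have "amenable S m r M" unfolding amenable_def
    using fin MS cM ne minM assms(2) clos by simp
  thus ?thesis using opt by blast
qed

end
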